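(* Let $g$ be a nondegenerate symmetric bilinear form on $\mathbb{R}^n$, let $A$ be a $g$-symmetric endomorphism of $\mathbb{R}^n$ and let $\lambda$ be a real eigenvalue of $A$. Then $\big|\sigma\big(g|_{\mathrm{Ker}(A-\lambda)^n}\big)\big|\le\dim\mathrm{Ker}(A-\lambda)$. Moreover, the restriction of $g$ to the eigenspace $\mathrm{Ker}(A-\lambda)$ is nondegenerate if and only if the algebraic multiplicity $\dim\mathrm{Ker}(A-\lambda)^n$ and the geometric multiplicity $\dim\mathrm{Ker}(A-\lambda)$ of $\lambda$ coincide.
   Context: $g$ is not assumed positive definite; $A$ is $g$-symmetric if $g(Av,w)=g(v,Aw)$ for all $v,w$. For a subspace $W$, $g|_W$ is the restriction of $g$ to $W\times W$, and $\sigma$ of a symmetric bilinear form is its number of positive squares minus its number of negative squares. *)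

theory Defs
  imports "HOL-Analysis.Analysis"
begin

text \<open>Symmetric bilinear forms on R^n (here real^'n, n = CARD('n)).\<close>

definition sym_bilinear :: "('a::real_vector \<Rightarrow> 'a \<Rightarrow> real) \<Rightarrow> bool" where
  "sym_bilinear g \<longleftrightarrow> bilinear g \<and> (\<forall>v w. g v w = g w v)"

definition nondegenerate_on :: "('a::real_vector \<Rightarrow> 'a \<Rightarrow> real) \<Rightarrow> 'a set \<Rightarrow> bool" where
  "nondegenerate_on g W \<longleftrightarrow> (\<forall>w\<in>W. (\<forall>v\<in>W. g w v = 0) \<longrightarrow> w = 0)"

definition g_symmetric :: "('a::real_vector \<Rightarrow> 'a \<Rightarrow> real) \<Rightarrow> ('a \<Rightarrow> 'a) \<Rightarrow> bool" where
  "g_symmetric g A \<longleftrightarrow> (\<forall>v w. g (A v) w = g v (A w))"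

definition pos_index :: "('a::euclidean_space \<Rightarrow> 'a \<Rightarrow> real) \<Rightarrow> 'a set \<Rightarrow> nat" where
  "pos_index g W = Max {dim U | U. subspace U \<and> U \<subseteq> W \<and> (\<forall>u\<in>U. u \<noteq> 0 \<longrightarrow> g u u > 0)}"

definition neg_index :: "('a::euclidean_space \<Rightarrow> 'a \<Rightarrow> real) \<Rightarrow> 'a set \<Rightarrow> nat" where
  "neg_index g W = Max {dim U | U. subspace U \<and> U \<subseteq> W \<and> (\<forall>u\<in>U. u \<noteq> 0 \<longrightarrow> g u u < 0)}"

definition signature :: "('a::euclidean_space \<Rightarrow> 'a \<Rightarrow> real) \<Rightarrow> 'a set \<Rightarrow> int" where
  "signature g W = int (pos_index g W) - int (neg_index g W)"

definition gen_kernel :: "('a::real_vector \<Rightarrow> 'a) \<Rightarrow> real \<Rightarrow> nat \<Rightarrow> 'a set" where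
  "gen_kernel A c k = {v. ((\<lambda>x. A x - c *\<^sub>R x) ^^ k) v = 0}"

end

theory Submission
  imports Defs
begin

lemma pos_index_ge:
  fixes g :: "'a::euclidean_space \<Rightarrow> 'a \<Rightarrow> real"
  assumes "subspace U" "U \<subseteq> W" "\<forall>u\<in>U. u \<noteq> 0 \<longrightarrow> g u u > 0"
  shows "dim U \<le> pos_index g W"
proof -
  have fin: "finite {dim U | U. subspace U \<and> U \<subseteq> W \<and> (\<forall>u\<in>U. u \<noteq> 0 \<longrightarrow> g u u > 0)}"
    by (rule finite_subset[of _ "{..DIM('a)}"]) (auto simp: dim_subset_UNIV)
  show ?thesis unfolding pos_index_def
    by (rule Max_ge[OF fin]) (use assms in blast)
qed

lemma pos_index_obtain:
  fixes g :: "'a::euclidean_space \<Rightarrow> 'a \<Rightarrow> real"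
  assumes "subspace W"
  obtains U where "subspace U" "U \<subseteq> W" "\<forall>u\<in>U. u \<noteq> 0 \<longrightarrow> g u u > 0" "dim U = pos_index g W"
proof -
  have fin: "finite {dim U | U. subspace U \<and> U \<subseteq> W \<and> (\<forall>u\<in>U. u \<noteq> 0 \<longrightarrow> g u u > 0)}"
    by (rule finite_subset[of _ "{..DIM('a)}"]) (auto simp: dim_subset_UNIV)
  have ne: "{dim U | U. subspace U \<and> U \<subseteq> W \<and> (\<forall>u\<in>U. u \<noteq> 0 \<longrightarrow> g u u > 0)} \<noteq> {}"
    using assms subspace_0[of W] by (auto intro!: exI[of _ "{0}"] simp: subspace_0)
  from Max_in[OF fin ne] obtain U where U: "subspace U" "U \<subseteq> W" "\<forall>u\<in>U. u \<noteq> 0 \<longrightarrow> g u u > 0"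
    "Max {dim U | U. subspace U \<and> U \<subseteq> W \<and> (\<forall>u\<in>U. u \<noteq> 0 \<longrightarrow> g u u > 0)} = dim U" by auto
  show ?thesis by (rule that[OF U(1-3)]) (simp add: U(4) pos_index_def)
qed

lemma neg_index_pos:
  "neg_index g W = pos_index (\<lambda>x y. - g x y) W"
  unfolding neg_index_def pos_index_def by simp

lemma dim_disjoint:
  fixes U :: "'a::euclidean_space set"
  assumes "subspace U" "subspace Q" "subspace W" "U \<subseteq> W" "Q \<subseteq> W" "U \<inter> Q \<subseteq> {0}"
  shows "dim U + dim Q \<le> dim W"
proof -
  have "dim {x + y |x y. x \<in> U \<and> y \<in> Q} + dim (U \<inter> Q) = dim U + dim Q"
    using dim_sums_Int[OF assms(1,2)] .
  moreover have "U \<inter> Q = {0}" using assms subspace_0 by auto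
  moreover have "dim {x + y |x y. x \<in> U \<and> y \<in> Q} \<le> dim W"
    by (rule dim_subset) (use assms subspace_add in blast)
  ultimately show ?thesis by simp
qed

lemma pos_index_le:
  fixes g :: "'a::euclidean_space \<Rightarrow> 'a \<Rightarrow> real"
  assumes "subspace W" "subspace Q" "Q \<subseteq> W" "\<forall>u\<in>Q. u \<noteq> 0 \<longrightarrow> g u u \<le> 0"
  shows "pos_index g W + dim Q \<le> dim W"
proof -
  obtain U where U: "subspace U" "U \<subseteq> W" "\<forall>u\<in>U. u \<noteq> 0 \<longrightarrow> g u u > 0" "dim U = pos_index g W"
    using pos_index_obtain[OF assms(1)] by blast
  have "U \<inter> Q \<subseteq> {0}" using U(3) assms(4) by force
  from dim_disjoint[OF U(1) assms(2) assms(1) U(2) assms(3) this] U(4) show ?thesis by simp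
qed

lemma functional_kernel_dim:
  fixes phi :: "'a::euclidean_space \<Rightarrow> real"
  assumes "linear phi" "subspace S"
  shows "dim S \<le> dim (S \<inter> {x. phi x = 0}) + 1"
proof (cases "\<forall>x\<in>S. phi x = 0")
  case True
  then have "S \<inter> {x. phi x = 0} = S" by auto
  then show ?thesis by simp
next
  case False
  then obtain x where x: "x \<in> S" "phi x \<noteq> 0" by auto
  let ?T = "S \<inter> {x. phi x = 0}"
  have sT: "subspace ?T" using assms by (intro subspace_inter) (simp_all add: subspace_def linear_0[OF assms(1)] linear_add[OF assms(1)] linear_scale[OF assms(1)])
  have "S \<subseteq> span (insert x ?T)"
  proof
    fix v assume v: "v \<in> S"
    let ?c = "phi v / phi x"
    have "v - ?c *\<^sub>R x \<in> S" using v x(1) assms(2) by (intro subspace_diff subspace_scale)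
    moreover have "phi (v - ?c *\<^sub>R x) = 0"
      using x(2) by (simp add: linear_diff[OF assms(1)] linear_scale[OF assms(1)])
    ultimately have "v - ?c *\<^sub>R x \<in> ?T" by simp
    then have "v - ?c *\<^sub>R x \<in> span ?T" by (rule span_base)
    then show "v \<in> span (insert x ?T)"
      unfolding span_insert by blast
  qed
  then have "dim S \<le> dim (span (insert x ?T))" by (rule dim_subset)
  then have "dim S \<le> dim (insert x ?T)" by (simp only: dim_span)
  also have "\<dots> \<le> dim ?T + 1" by (simp add: dim_insert)
  finally show ?thesis .
qed


lemma kernel_subspace: "linear (phi::'a::real_vector \<Rightarrow> 'b::real_vector) \<Longrightarrow> subspace {x. phi x = 0}"
  by (simp add: subspace_def linear_0 linear_add linear_scale)

lemma rank_ineq: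
  fixes f :: "'a::euclidean_space \<Rightarrow> 'b::euclidean_space"
  assumes "linear f" "subspace S"
  shows "dim S \<le> dim (f ` S) + dim (S \<inter> {x. f x = 0})"
proof -
  have "\<And>S. subspace S \<Longrightarrow> dim (f ` S) = d \<Longrightarrow> dim S \<le> dim (f ` S) + dim (S \<inter> {x. f x = 0})" for d
  proof (induction d rule: less_induct)
    case (less d S)
    show ?case
    proof (cases "\<forall>x\<in>S. f x = 0")
      case True
      then have "S \<inter> {x. f x = 0} = S" by auto
      then show ?thesis by simp
    next
      case False
      then obtain x where x: "x \<in> S" "f x \<noteq> 0" by auto
      define S' where "S' = S \<inter> {y. f x \<bullet> f y = 0}"
      have lin: "linear (\<lambda>y. f x \<bullet> f y)"
        by (rule linearI) (simp_all add: linear_add[OF assms(1)] linear_scale[OF assms(1)] inner_add_right)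
      have sS': "subspace S'" unfolding S'_def using less.prems(1) lin
        by (intro subspace_inter kernel_subspace) auto
      have d1: "dim S \<le> dim S' + 1"
        using functional_kernel_dim[OF lin less.prems(1)] S'_def by simp
      have sub: "f ` S' \<subseteq> {z. f x \<bullet> z = 0}" by (auto simp: S'_def)
      have "span (f ` S') \<subseteq> {z. f x \<bullet> z = 0}"
        by (rule span_minimal[OF sub]) (rule subspace_hyperplane)
      hence "f x \<notin> span (f ` S')" using x(2) by auto
      moreover have "f x \<in> span (f ` S)" using x by (simp add: span_base)
      moreover have "span (f ` S') \<subseteq> span (f ` S)" by (rule span_mono) (auto simp: S'_def)
      ultimately have "span (f ` S') \<subset> span (f ` S)" by blast
      hence lt: "dim (f ` S') < d" using dim_psubset less.prems(2) by blast
      have IH: "dim S' \<le> dim (f ` S') + dim (S' \<inter> {x. f x = 0})"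
        using less.IH[OF lt sS' refl] .
      have "S' \<inter> {x. f x = 0} = S \<inter> {x. f x = 0}" by (auto simp: S'_def)
      then show ?thesis using d1 IH lt less.prems(2) by simp
    qed
  qed
  then show ?thesis using assms by blast
qed

lemma sym_bilinear_neg: "sym_bilinear g \<Longrightarrow> sym_bilinear (\<lambda>x y. - g x y)"
  unfolding sym_bilinear_def bilinear_def by (auto intro: linear_compose_neg)

lemma posdef_extend:
  fixes g :: "'a::euclidean_space \<Rightarrow> 'a \<Rightarrow> real"
  assumes bl: "bilinear g" and sP: "subspace P" and pd: "\<forall>u\<in>P. u \<noteq> 0 \<longrightarrow> g u u > 0"
    and o1: "\<forall>p\<in>P. g p x = 0" and o2: "\<forall>p\<in>P. g x p = 0" and gx: "g x x > 0"
  shows "(\<forall>u\<in>span (insert x P). u \<noteq> 0 \<longrightarrow> g u u > 0) \<and> dim (span (insert x P)) = dim P + 1"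
proof
  have xP: "x \<notin> P" using o1 gx by force
  have spP: "span P = P" using sP by (simp add: span_eq_iff)
  show "dim (span (insert x P)) = dim P + 1" proof -
    have "x \<notin> span P" by (metis xP spP)
    then show ?thesis using dim_insert[of x P] by (simp add: dim_span)
  qed
  show "\<forall>u\<in>span (insert x P). u \<noteq> 0 \<longrightarrow> g u u > 0"
  proof (intro ballI impI)
    fix u assume u: "u \<in> span (insert x P)" "u \<noteq> 0"
    then obtain k where k: "u - k *\<^sub>R x \<in> P" unfolding span_insert spP by blast
    define p where "p = u - k *\<^sub>R x"
    have up: "u = p + k *\<^sub>R x" by (simp add: p_def)
    have "g u u = g p p + k * k * g x x"
      using o1 o2 k unfolding up p_def[symmetric]
      by (simp add: bilinear_ladd[OF bl] bilinear_radd[OF bl] bilinear_lmul[OF bl] bilinear_rmul[OF bl])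
    moreover have "g p p \<ge> 0" using pd k p_def by (cases "p = 0") (auto simp: bilinear_lzero[OF bl] less_imp_le)
    moreover have "p \<noteq> 0 \<or> k \<noteq> 0" using u(2) up by auto
    moreover have "p \<noteq> 0 \<Longrightarrow> g p p > 0" using pd k p_def by auto
    ultimately show "g u u > 0" using gx
    proof (cases "p = 0")
      case True
      have "k \<noteq> 0" using u(2) up True by auto
      then have "k * k > 0" using not_real_square_gt_zero by blast
      then have "k * k * g x x > 0" using gx by simp
      then show ?thesis using \<open>g u u = g p p + k * k * g x x\<close> \<open>g p p \<ge> 0\<close> by linarith
    next
      case False
      then have "g p p > 0" using pd k p_def by auto
      moreover have "k * k * g x x \<ge> 0" using gx by simp
      ultimately show ?thesis using \<open>g u u = g p p + k * k * g x x\<close> by linarith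
    qed
  qed
qed


lemma inertia_ex:
  fixes g :: "'a::euclidean_space \<Rightarrow> 'a \<Rightarrow> real"
  assumes sb: "sym_bilinear g"
  shows "subspace E \<Longrightarrow> nondegenerate_on g E \<Longrightarrow> \<exists>P Q. subspace P \<and> P \<subseteq> E \<and> (\<forall>u\<in>P. u \<noteq> 0 \<longrightarrow> g u u > 0)
     \<and> subspace Q \<and> Q \<subseteq> E \<and> (\<forall>u\<in>Q. u \<noteq> 0 \<longrightarrow> - g u u > 0) \<and> dim E \<le> dim P + dim Q"
proof (induction "dim E" arbitrary: E rule: less_induct)
  case (less E)
  have bl: "bilinear g" and sy: "\<And>v w. g v w = g w v" using sb by (auto simp: sym_bilinear_def)
  have bl': "bilinear (\<lambda>a b. - g a b)" using sym_bilinear_neg[OF sb] by (simp add: sym_bilinear_def)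
  show ?case
  proof (cases "\<forall>x\<in>E. g x x = 0")
    case True
    have "E \<subseteq> {0}"
    proof
      fix w assume w: "w \<in> E"
      have "\<forall>v\<in>E. g w v = 0"
      proof
        fix v assume v: "v \<in> E"
        have "g (w+v) (w+v) = 0" using True w v less.prems(1) by (simp add: subspace_add)
        hence "g w w + g w v + g v w + g v v = 0"
          by (simp add: bilinear_ladd[OF bl] bilinear_radd[OF bl] algebra_simps)
        thus "g w v = 0" using True w v sy[of v w] by simp
      qed
      thus "w \<in> {0}" using less.prems(2) w unfolding nondegenerate_on_def by auto
    qed
    hence "dim E \<le> dim {0::'a}" by (rule dim_subset)
    moreover have "dim {0::'a} = 0" by (simp add: dim_insert)
    ultimately have "dim E = 0" by simp
    have "{0} \<subseteq> E" using subspace_0[OF less.prems(1)] by simp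
    then show ?thesis using \<open>dim E = 0\<close> by (intro exI[of _ "{0}"]) simp
  next
    case False
    then obtain x where x: "x \<in> E" "g x x \<noteq> 0" by auto
    define E' where "E' = E \<inter> {y. g x y = 0}"
    have lin: "linear (g x)" using bl unfolding bilinear_def by simp
    have sE': "subspace E'" unfolding E'_def by (intro subspace_inter kernel_subspace less.prems(1) lin)
    have d1: "dim E \<le> dim E' + 1" using functional_kernel_dim[OF lin less.prems(1)] E'_def by simp
    have "x \<notin> E'" using x E'_def by auto
    have E'E: "E' \<subseteq> E" by (auto simp: E'_def)
    have "span E' \<subset> span E"
    proof -
      have h1: "span E' = E'" using sE' by (simp add: span_eq_iff)
      have h2: "span E = E" using less.prems(1) by (simp add: span_eq_iff)
      have h3: "E' \<subset> E" using \<open>x \<notin> E'\<close> x(1) E'E by blast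
      show ?thesis by (subst h1, subst h2, rule h3)
    qed
    hence lt: "dim E' < dim E" by (rule dim_psubset)
    have nd: "nondegenerate_on g E'"
      unfolding nondegenerate_on_def
    proof (intro ballI impI)
      fix w assume w: "w \<in> E'" "\<forall>v\<in>E'. g w v = 0"
      have "\<forall>v\<in>E. g w v = 0"
      proof
        fix v assume v: "v \<in> E"
        let ?c = "g x v / g x x"
        have "v - ?c *\<^sub>R x \<in> E'" using v x less.prems(1) unfolding E'_def
          by (simp add: subspace_diff subspace_scale bilinear_rsub[OF bl] bilinear_rmul[OF bl])
        hence "g w (v - ?c *\<^sub>R x) = 0" using w by auto
        moreover have "g w x = 0" using w(1) sy[of w x] unfolding E'_def by simp
        ultimately show "g w v = 0" by (simp add: bilinear_rsub[OF bl] bilinear_rmul[OF bl])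
      qed
      thus "w = 0" using less.prems(2) w E'E unfolding nondegenerate_on_def by auto
    qed
    obtain P' Q' where PQ': "subspace P'" "P' \<subseteq> E'" "\<forall>u\<in>P'. u \<noteq> 0 \<longrightarrow> g u u > 0"
      "subspace Q'" "Q' \<subseteq> E'" "\<forall>u\<in>Q'. u \<noteq> 0 \<longrightarrow> - g u u > 0" "dim E' \<le> dim P' + dim Q'"
      using less(1)[OF lt sE' nd] by blast
    have sy': "\<And>p. g p x = g x p" using sy by blast
    have o1: "\<forall>p\<in>P'. g p x = 0" "\<forall>p\<in>P'. g x p = 0" using PQ'(2) unfolding E'_def by (auto simp: sy')
    have o2: "\<forall>p\<in>Q'. - g p x = 0" "\<forall>p\<in>Q'. - g x p = 0" using PQ'(5) unfolding E'_def by (auto simp: sy')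
    show ?thesis
    proof (cases "g x x > 0")
      case True
      from posdef_extend[OF bl PQ'(1) PQ'(3) o1 True]
      have ext: "\<forall>u\<in>span (insert x P'). u \<noteq> 0 \<longrightarrow> g u u > 0" "dim (span (insert x P')) = dim P' + 1"
        by auto
      have sub: "span (insert x P') \<subseteq> E"
        using x(1) PQ'(2) E'E less.prems(1) by (intro span_minimal) auto
      have QE: "Q' \<subseteq> E" using PQ'(5) E'E by blast
      have dd: "dim E \<le> dim (span (insert x P')) + dim Q'" using ext(2) PQ'(7) d1 by linarith
      show ?thesis
      proof (rule exI[of _ "span (insert x P')"], rule exI[of _ Q'], intro conjI)
      qed (fact subspace_span sub ext(1) PQ'(4) QE PQ'(6) dd)+
    next
      case False
      then have gx: "- g x x > 0" using x by simp
      from posdef_extend[OF bl' PQ'(4) PQ'(6) o2 gx]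
      have ext: "\<forall>u\<in>span (insert x Q'). u \<noteq> 0 \<longrightarrow> - g u u > 0" "dim (span (insert x Q')) = dim Q' + 1"
        by auto
      have sub: "span (insert x Q') \<subseteq> E"
        using x(1) PQ'(5) E'E less.prems(1) by (intro span_minimal) auto
      have PE: "P' \<subseteq> E" using PQ'(2) E'E by blast
      have dd: "dim E \<le> dim P' + dim (span (insert x Q'))" using ext(2) PQ'(7) d1 by linarith
      show ?thesis
      proof (rule exI[of _ P'], rule exI[of _ "span (insert x Q')"], intro conjI)
      qed (fact subspace_span sub ext(1) PQ'(1) PE PQ'(3) dd)+
    qed
  qed
qed

lemma inertia:
  fixes g :: "'a::euclidean_space \<Rightarrow> 'a \<Rightarrow> real"
  assumes "sym_bilinear g" "subspace E" "nondegenerate_on g E"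
  shows "dim E \<le> pos_index g E + neg_index g E"
proof -
  obtain P Q where PQ: "subspace P" "P \<subseteq> E" "\<forall>u\<in>P. u \<noteq> 0 \<longrightarrow> g u u > 0"
     "subspace Q" "Q \<subseteq> E" "\<forall>u\<in>Q. u \<noteq> 0 \<longrightarrow> - g u u > 0" "dim E \<le> dim P + dim Q"
    using inertia_ex[OF assms] by blast
  have "dim P \<le> pos_index g E" using pos_index_ge[of P E g] PQ by blast
  moreover have "dim Q \<le> neg_index g E" unfolding neg_index_pos
    using pos_index_ge[of Q E "\<lambda>x y. - g x y"] PQ by blast
  ultimately show ?thesis using PQ(7) by linarith
qed


lemma funpow_linear: "linear (N::'a::real_vector \<Rightarrow> 'a) \<Longrightarrow> linear (N ^^ k)"
  by (induction k) (simp_all add: linear_id linear_compose)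

lemma funpow_gsym:
  assumes "\<And>a b. g (N a) b = g a (N b)"
  shows "g ((N ^^ k) a) b = g a ((N ^^ k) b)"
proof (induction k arbitrary: a b)
  case 0 then show ?case by simp
next
  case (Suc k)
  have "g ((N ^^ Suc k) a) b = g (N ((N ^^ k) a)) b" by simp
  also have "\<dots> = g ((N ^^ k) a) (N b)" by (rule assms)
  also have "\<dots> = g a ((N ^^ k) (N b))" by (rule Suc)
  also have "\<dots> = g a ((N ^^ Suc k) b)" by (simp add: funpow_swap1)
  finally show ?case .
qed

lemma ker_mono:
  assumes "linear (N::'a::real_vector \<Rightarrow> 'a)" "i \<le> j" "(N ^^ i) x = 0"
  shows "(N ^^ j) x = 0"
proof -
  have "N ^^ j = N ^^ (j - i) \<circ> N ^^ i" using funpow_add[of "j - i" i N] assms(2) by simp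
  then have "(N ^^ j) x = (N ^^ (j - i)) ((N ^^ i) x)" by simp
  also have "\<dots> = 0" using assms(3) linear_0[OF funpow_linear[OF assms(1)]] by simp
  finally show ?thesis .
qed

lemma ker_stable:
  assumes "linear (N::'a::real_vector \<Rightarrow> 'a)"
    and st: "{x. (N ^^ i) x = 0} = {x. (N ^^ Suc i) x = 0}"
  shows "{x. (N ^^ (i + j)) x = 0} = {x. (N ^^ i) x = 0}"
proof (induction j)
  case 0 then show ?case by simp
next
  case (Suc j)
  show ?case
  proof
    show "{x. (N ^^ i) x = 0} \<subseteq> {x. (N ^^ (i + Suc j)) x = 0}"
      using ker_mono[OF assms(1), of i "i + Suc j"] by auto
    show "{x. (N ^^ (i + Suc j)) x = 0} \<subseteq> {x. (N ^^ i) x = 0}"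
    proof
      fix x assume "x \<in> {x. (N ^^ (i + Suc j)) x = 0}"
      then have "(N ^^ (Suc i + j)) x = 0" by simp
      then have "(N ^^ Suc i) ((N ^^ j) x) = 0"
        by (simp only: funpow_add o_apply)
      then have "(N ^^ i) ((N ^^ j) x) = 0" using st by blast
      then have "(N ^^ (i + j)) x = 0" by (simp only: funpow_add o_apply)
      then have "x \<in> {x. (N ^^ (i + j)) x = 0}" by simp
      then show "x \<in> {x. (N ^^ i) x = 0}" using Suc by simp
    qed
  qed
qed

lemma ker_growth:
  fixes N :: "'a::euclidean_space \<Rightarrow> 'a"
  assumes "linear N"
  shows "(\<exists>i<j. {x. (N ^^ i) x = 0} = {x. (N ^^ Suc i) x = 0}) \<or> j \<le> dim {x. (N ^^ j) x = 0}"
proof (induction j)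
  case 0 then show ?case by simp
next
  case (Suc j)
  show ?case
  proof (cases "\<exists>i<j. {x. (N ^^ i) x = 0} = {x. (N ^^ Suc i) x = 0}")
    case True then show ?thesis by (meson less_SucI)
  next
    case False
    with Suc have dj: "j \<le> dim {x. (N ^^ j) x = 0}" by blast
    show ?thesis
    proof (cases "{x. (N ^^ j) x = 0} = {x. (N ^^ Suc j) x = 0}")
      case True then show ?thesis by blast
    next
      case False
      have sub: "{x. (N ^^ j) x = 0} \<subseteq> {x. (N ^^ Suc j) x = 0}"
        using ker_mono[OF assms, of j "Suc j"] by auto
      have s1: "span {x. (N ^^ j) x = 0} = {x. (N ^^ j) x = 0}"
        using kernel_subspace[OF funpow_linear[OF assms, of j]] by (simp add: span_eq_iff)
      have s2: "span {x. (N ^^ Suc j) x = 0} = {x. (N ^^ Suc j) x = 0}"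
        using kernel_subspace[OF funpow_linear[OF assms, of "Suc j"]] by (simp add: span_eq_iff)
      have "span {x. (N ^^ j) x = 0} \<subset> span {x. (N ^^ Suc j) x = 0}"
        using sub False by (subst s1, subst s2) blast
      then have "dim {x. (N ^^ j) x = 0} < dim {x. (N ^^ Suc j) x = 0}" by (rule dim_psubset)
      then show ?thesis using dj by simp
    qed
  qed
qed

lemma ker_2n:
  fixes N :: "'a::euclidean_space \<Rightarrow> 'a"
  assumes "linear N" "(N ^^ (DIM('a) + DIM('a))) x = 0"
  shows "(N ^^ DIM('a)) x = 0"
proof (cases "\<exists>i<DIM('a). {x. (N ^^ i) x = 0} = {x. (N ^^ Suc i) x = 0}")
  case True
  then obtain i where i: "i < DIM('a)" "{x. (N ^^ i) x = 0} = {x. (N ^^ Suc i) x = 0}" by blast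
  have "{x. (N ^^ (i + (DIM('a) + DIM('a) - i))) x = 0} = {x. (N ^^ i) x = 0}"
    by (rule ker_stable[OF assms(1) i(2)])
  moreover have "{x. (N ^^ (i + (DIM('a) - i))) x = 0} = {x. (N ^^ i) x = 0}"
    by (rule ker_stable[OF assms(1) i(2)])
  ultimately have "{x. (N ^^ (DIM('a) + DIM('a))) x = 0} = {x. (N ^^ DIM('a)) x = 0}"
    using i(1) by simp
  then show ?thesis using assms(2) by blast
next
  case False
  then have "DIM('a) \<le> dim {x. (N ^^ DIM('a)) x = 0}" using ker_growth[OF assms(1)] by blast
  then have "{x. (N ^^ DIM('a)) x = 0} = UNIV"
    using subspace_dim_equal[OF kernel_subspace[OF funpow_linear[OF assms(1)]] subspace_UNIV]
    by simp
  then show ?thesis by blast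
qed


lemma image_subspace:
  assumes "linear (f::'a::real_vector \<Rightarrow> 'b::real_vector)" "subspace S"
  shows "subspace (f ` S)"
  unfolding subspace_def
proof (intro conjI ballI allI)
  show "0 \<in> f ` S" using assms linear_0[OF assms(1)] subspace_0 by (metis image_eqI)
next
  fix x y assume "x \<in> f ` S" "y \<in> f ` S"
  then obtain a b where "a \<in> S" "b \<in> S" "x = f a" "y = f b" by auto
  then show "x + y \<in> f ` S" using assms(2) linear_add[OF assms(1), of a b]
    by (metis image_eqI subspace_add)
next
  fix c x assume "x \<in> f ` S"
  then obtain a where "a \<in> S" "x = f a" by auto
  then show "c *\<^sub>R x \<in> f ` S" using assms(2) linear_scale[OF assms(1), of c a]
    by (metis image_eqI subspace_scale)
qed

lemma perp_subspace:
  assumes "bilinear g"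
  shows "subspace {y. \<forall>b\<in>B. g y b = 0}"
  unfolding subspace_def
  by (simp add: bilinear_lzero[OF assms] bilinear_ladd[OF assms] bilinear_lmul[OF assms])

lemma perp_dim:
  fixes g :: "'a::euclidean_space \<Rightarrow> 'a \<Rightarrow> real"
  assumes "bilinear g" "subspace E" "finite B"
  shows "dim E \<le> dim (E \<inter> {y. \<forall>b\<in>B. g y b = 0}) + card B"
  using assms(3)
proof (induction B rule: finite_induct)
  case empty
  then show ?case by simp
next
  case (insert b B)
  have lin: "linear (\<lambda>y. g y b)" using assms(1) unfolding bilinear_def by simp
  have s: "subspace (E \<inter> {y. \<forall>b\<in>B. g y b = 0})"
    by (intro subspace_inter assms(2) perp_subspace assms(1))
  have eq: "E \<inter> {y. \<forall>c\<in>insert b B. g y c = 0} = (E \<inter> {y. \<forall>b\<in>B. g y b = 0}) \<inter> {y. g y b = 0}"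
    by auto
  have "dim (E \<inter> {y. \<forall>b\<in>B. g y b = 0}) \<le> dim (E \<inter> {y. \<forall>c\<in>insert b B. g y c = 0}) + 1"
    unfolding eq by (rule functional_kernel_dim[OF lin s])
  then show ?case using insert by simp
qed

lemma E_nondeg:
  fixes g :: "'a::euclidean_space \<Rightarrow> 'a \<Rightarrow> real" and N :: "'a \<Rightarrow> 'a"
  assumes sb: "sym_bilinear g" and nd: "nondegenerate_on g UNIV" and lN: "linear N"
    and sN: "\<And>a b. g (N a) b = g a (N b)"
  shows "nondegenerate_on g {x. (N ^^ DIM('a)) x = 0}"
proof -
  define F where "F = N ^^ DIM('a)"
  have bl: "bilinear g" using sb by (simp add: sym_bilinear_def)
  have lF: "linear F" unfolding F_def by (rule funpow_linear[OF lN])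
  have FF: "F (F y) = (N ^^ (DIM('a) + DIM('a))) y" for y
    unfolding F_def by (simp only: funpow_add o_apply)
  have int0: "range F \<inter> {x. F x = 0} \<subseteq> {0}"
  proof
    fix x assume "x \<in> range F \<inter> {x. F x = 0}"
    then obtain y where y: "x = F y" "F (F y) = 0" by auto
    then have "(N ^^ (DIM('a) + DIM('a))) y = 0" using FF by simp
    then have "F y = 0" unfolding F_def by (rule ker_2n[OF lN])
    then show "x \<in> {0}" using y by simp
  qed
  have "dim (range F \<inter> {x. F x = 0}) \<le> dim {0::'a}" by (rule dim_subset[OF int0])
  moreover have "dim {0::'a} = 0" by (simp add: dim_insert)
  ultimately have d0: "dim (range F \<inter> {x. F x = 0}) = 0" by simp
  have sR: "subspace (range F)" by (rule image_subspace[OF lF subspace_UNIV])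
  have sFR: "subspace (F ` range F)" by (rule image_subspace[OF lF sR])
  have "dim (range F) \<le> dim (F ` range F) + dim (range F \<inter> {x. F x = 0})"
    by (rule rank_ineq[OF lF sR])
  then have "dim (range F) \<le> dim (F ` range F)" using d0 by simp
  then have FReq: "F ` range F = range F"
    by (intro subspace_dim_equal[OF sFR sR]) auto
  show ?thesis
    unfolding nondegenerate_on_def
  proof (intro ballI impI)
    fix w assume w: "w \<in> {x. (N ^^ DIM('a)) x = 0}" "\<forall>v\<in>{x. (N ^^ DIM('a)) x = 0}. g w v = 0"
    have Fw: "F w = 0" using w(1) unfolding F_def by simp
    have "\<forall>v\<in>UNIV. g w v = 0"
    proof
      fix v :: 'a
      have "F v \<in> F ` range F" using FReq by auto
      then obtain u where u: "F v = F (F u)" by auto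
      define e where "e = v - F u"
      have "F e = 0" unfolding e_def using u by (simp add: linear_diff[OF lF])
      then have ge: "g w e = 0" using w(2) unfolding F_def by simp
      have "g w (F u) = g (F w) u" unfolding F_def by (rule funpow_gsym[of g N, OF sN, symmetric])
      also have "\<dots> = 0" using Fw by (simp add: bilinear_lzero[OF bl])
      finally have "g w (F u) = 0" .
      moreover have "v = e + F u" unfolding e_def by simp
      ultimately show "g w v = 0" using ge by (simp add: bilinear_radd[OF bl])
    qed
    then show "w = 0" using nd unfolding nondegenerate_on_def by blast
  qed
qed


lemma iso_exists:
  fixes g :: "'a::euclidean_space \<Rightarrow> 'a \<Rightarrow> real" and N :: "'a \<Rightarrow> 'a"
  assumes sb: "sym_bilinear g" and lN: "linear N"
    and sN: "\<And>a b. g (N a) b = g a (N b)"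
  shows "\<exists>I. subspace I \<and> I \<subseteq> {x. (N ^^ DIM('a)) x = 0} \<and> (\<forall>a\<in>I. \<forall>b\<in>I. g a b = 0)
     \<and> dim {x. (N ^^ DIM('a)) x = 0} \<le> 2 * dim I + dim {x. N x = 0}"
proof -
  define E where "E = {x. (N ^^ DIM('a)) x = 0}"
  have bl: "bilinear g" and sy: "\<And>v w. g v w = g w v" using sb by (auto simp: sym_bilinear_def)
  have sE: "subspace E" unfolding E_def by (rule kernel_subspace[OF funpow_linear[OF lN]])
  have EN: "N x \<in> E" if "x \<in> E" for x
  proof -
    have "(N ^^ DIM('a)) (N x) = N ((N ^^ DIM('a)) x)" by (simp only: funpow_swap1)
    also have "\<dots> = 0" using that linear_0[OF lN] unfolding E_def by simp
    finally show ?thesis unfolding E_def by simp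
  qed
  define S where "S = {dim I | I. subspace I \<and> I \<subseteq> E \<and> N ` I \<subseteq> I \<and> (\<forall>a\<in>I. \<forall>b\<in>I. g a b = 0)}"
  have finS: "finite S"
    unfolding S_def by (rule finite_subset[of _ "{..DIM('a)}"]) (auto simp: dim_subset_UNIV)
  have "0 \<in> E" using sE subspace_0 by blast
  then have "dim {0::'a} \<in> S" unfolding S_def using linear_0[OF lN] bilinear_lzero[OF bl]
    by (intro CollectI exI[of _ "{0::'a}"]) auto
  then have neS: "S \<noteq> {}" by blast
  from Max_in[OF finS neS] obtain I where I: "subspace I" "I \<subseteq> E" "N ` I \<subseteq> I"
    "\<forall>a\<in>I. \<forall>b\<in>I. g a b = 0" "dim I = Max S" unfolding S_def by auto
  have maxI: "dim J \<le> dim I" if "subspace J" "J \<subseteq> E" "N ` J \<subseteq> J" "\<forall>a\<in>J. \<forall>b\<in>J. g a b = 0" for J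
  proof -
    have "dim J \<in> S" unfolding S_def using that by blast
    then show ?thesis using Max_ge[OF finS] I(5) by simp
  qed
  define P where "P = E \<inter> {y. \<forall>i\<in>I. g y i = 0}"
  have sP: "subspace P" unfolding P_def by (intro subspace_inter sE perp_subspace bl)
  have PN: "N y \<in> P" if "y \<in> P" for y
  proof -
    have "N y \<in> E" using that EN unfolding P_def by blast
    moreover have "g (N y) i = 0" if "i \<in> I" for i
    proof -
      have "N i \<in> I" using I(3) that by blast
      then have "g y (N i) = 0" using \<open>y \<in> P\<close> unfolding P_def by blast
      then show ?thesis using sN by simp
    qed
    ultimately show ?thesis unfolding P_def by blast
  qed
  have PNk: "(N ^^ k) y \<in> P" if "y \<in> P" for y k
    using that by (induction k) (simp_all add: PN)
  have NP: "N ` P \<subseteq> I"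
  proof (rule ccontr)
    assume "\<not> N ` P \<subseteq> I"
    then obtain y where y: "y \<in> P" "N y \<notin> I" by auto
    have "(N ^^ DIM('a)) y = 0" using y(1) unfolding P_def E_def by blast
    then have ex: "\<exists>j. 1 \<le> j \<and> (N ^^ j) y \<in> I"
      using I(1) subspace_0 DIM_positive[where 'a='a]
      by (intro exI[of _ "DIM('a)"]) (auto simp del: DIM_positive)
    define j0 where "j0 = (LEAST j. 1 \<le> j \<and> (N ^^ j) y \<in> I)"
    have j0: "1 \<le> j0" "(N ^^ j0) y \<in> I" using LeastI_ex[OF ex] unfolding j0_def by auto
    have "j0 \<noteq> 1" using y(2) j0(2) by auto
    define i where "i = j0 - 2"
    have i: "j0 = Suc (Suc i)" using j0(1) \<open>j0 \<noteq> 1\<close> unfolding i_def by simp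
    define w where "w = (N ^^ Suc i) y"
    have "\<not> (1 \<le> Suc i \<and> (N ^^ Suc i) y \<in> I)"
      unfolding j0_def using not_less_Least[of "Suc i" "\<lambda>j. 1 \<le> j \<and> (N ^^ j) y \<in> I"] i j0_def
      by simp
    then have wI: "w \<notin> I" unfolding w_def by simp
    have NwI: "N w \<in> I" using j0(2) i unfolding w_def by simp
    have wP: "w \<in> P" unfolding w_def by (rule PNk[OF y(1)])
    have gww: "g w w = 0"
    proof -
      have "w = N ((N ^^ i) y)" unfolding w_def by simp
      then have "g w w = g ((N ^^ i) y) (N w)" using sN by simp
      also have "\<dots> = 0" using PNk[OF y(1), of i] NwI unfolding P_def by blast
      finally show ?thesis .
    qed
    have gwI: "g w a = 0" if "a \<in> I" for a using wP that unfolding P_def by blast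
    have gIw: "g a w = 0" if "a \<in> I" for a using gwI[OF that] sy[of a w] by simp
    define J where "J = span (insert w I)"
    have spI: "span I = I" using I(1) by (simp add: span_eq_iff)
    have Jmem: "\<exists>k. z - k *\<^sub>R w \<in> I" if "z \<in> J" for z
      using that unfolding J_def span_insert spI by blast
    have IJ: "I \<subseteq> J" unfolding J_def using span_superset[of "insert w I"] by blast
    have sJ: "subspace J" unfolding J_def by (rule subspace_span)
    have "w \<in> E" using wP unfolding P_def by blast
    then have JE: "J \<subseteq> E" unfolding J_def using I(2) sE by (intro span_minimal) auto
    have NJ: "N ` J \<subseteq> J"
    proof
      fix z assume "z \<in> N ` J"
      then obtain u where u: "u \<in> J" "z = N u" by auto
      then obtain k where k: "u - k *\<^sub>R w \<in> I" using Jmem by blast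
      have "N (u - k *\<^sub>R w) \<in> I" using k I(3) by blast
      moreover have "k *\<^sub>R N w \<in> I" using NwI I(1) by (simp add: subspace_scale)
      ultimately have "N (u - k *\<^sub>R w) + k *\<^sub>R N w \<in> I" using I(1) by (simp add: subspace_add)
      moreover have "N (u - k *\<^sub>R w) + k *\<^sub>R N w = N u"
        by (simp add: linear_diff[OF lN] linear_scale[OF lN])
      ultimately show "z \<in> J" using u IJ by auto
    qed
    have isoJ: "\<forall>a\<in>J. \<forall>b\<in>J. g a b = 0"
    proof (intro ballI)
      fix z1 z2 assume z: "z1 \<in> J" "z2 \<in> J"
      obtain k1 where k1: "z1 - k1 *\<^sub>R w \<in> I" using Jmem z(1) by blast
      obtain k2 where k2: "z2 - k2 *\<^sub>R w \<in> I" using Jmem z(2) by blast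
      define a1 where "a1 = z1 - k1 *\<^sub>R w"
      define a2 where "a2 = z2 - k2 *\<^sub>R w"
      have e1: "z1 = a1 + k1 *\<^sub>R w" and e2: "z2 = a2 + k2 *\<^sub>R w" by (simp_all add: a1_def a2_def)
      have "g z1 z2 = g a1 a2 + k2 * g a1 w + k1 * g w a2 + k1 * k2 * g w w"
        unfolding e1 e2
        by (simp add: bilinear_ladd[OF bl] bilinear_radd[OF bl] bilinear_lmul[OF bl] bilinear_rmul[OF bl] algebra_simps)
      moreover have "g a1 a2 = 0" using I(4) k1 k2 a1_def a2_def by blast
      ultimately show "g z1 z2 = 0" using gww gwI[of a2] gIw[of a1] k1 k2 a1_def a2_def by simp
    qed
    have "w \<notin> span I" by (subst spI) (rule wI)
    then have "dim J = dim I + 1" unfolding J_def using dim_insert[of w I] by (simp add: dim_span)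
    moreover have "dim J \<le> dim I" by (rule maxI[OF sJ JE NJ isoJ])
    ultimately show False by simp
  qed
  obtain B where B: "B \<subseteq> I" "independent B" "I \<subseteq> span B" "card B = dim I"
    using basis_exists[of I] by blast
  have finB: "finite B" using B(2) by (rule finiteI_independent)
  have sub: "E \<inter> {y. \<forall>b\<in>B. g y b = 0} \<subseteq> P"
  proof
    fix y assume y: "y \<in> E \<inter> {y. \<forall>b\<in>B. g y b = 0}"
    have lin: "linear (g y)" using bl unfolding bilinear_def by simp
    have "span B \<subseteq> {i. g y i = 0}"
      by (rule span_minimal) (use y in auto, rule kernel_subspace[OF lin])
    then show "y \<in> P" using y B(3) unfolding P_def by blast
  qed
  have d1: "dim E \<le> dim P + dim I"
    using perp_dim[OF bl sE finB] dim_subset[OF sub] B(4) by linarith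
  have d2: "dim P \<le> dim (N ` P) + dim (P \<inter> {x. N x = 0})" by (rule rank_ineq[OF lN sP])
  have d3: "dim (N ` P) \<le> dim I" by (rule dim_subset[OF NP])
  have d4: "dim (P \<inter> {x. N x = 0}) \<le> dim {x. N x = 0}" by (rule dim_subset) blast
  have "dim E \<le> 2 * dim I + dim {x. N x = 0}" using d1 d2 d3 d4 by linarith
  then show ?thesis using I(1,2,4) unfolding E_def by blast
qed


lemma main_generic:
  fixes g :: "'a::euclidean_space \<Rightarrow> 'a \<Rightarrow> real" and N :: "'a \<Rightarrow> 'a"
  assumes sb: "sym_bilinear g" and nd: "nondegenerate_on g UNIV" and lN: "linear N"
    and sN: "\<And>a b. g (N a) b = g a (N b)"
  shows "\<bar>int (pos_index g {x. (N ^^ DIM('a)) x = 0}) - int (neg_index g {x. (N ^^ DIM('a)) x = 0})\<bar>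
           \<le> int (dim {x. (N ^^ 1) x = 0})
         \<and> (nondegenerate_on g {x. (N ^^ 1) x = 0} \<longleftrightarrow>
             dim {x. (N ^^ DIM('a)) x = 0} = dim {x. (N ^^ 1) x = 0})"
proof -
  define E where "E = {x. (N ^^ DIM('a)) x = 0}"
  define K where "K = {x. (N ^^ 1) x = 0}"
  have bl: "bilinear g" using sb by (simp add: sym_bilinear_def)
  have Keq: "K = {x. N x = 0}" unfolding K_def by simp
  have sE: "subspace E" unfolding E_def by (rule kernel_subspace[OF funpow_linear[OF lN]])
  have sK: "subspace K" unfolding K_def by (rule kernel_subspace[OF funpow_linear[OF lN]])
  have ndE: "nondegenerate_on g E" unfolding E_def by (rule E_nondeg[OF sb nd lN sN])
  obtain I where I: "subspace I" "I \<subseteq> E" "\<forall>a\<in>I. \<forall>b\<in>I. g a b = 0" "dim E \<le> 2 * dim I + dim K"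
    using iso_exists[OF sb lN sN] unfolding E_def Keq by blast
  have m1: "dim E \<le> pos_index g E + neg_index g E" by (rule inertia[OF sb sE ndE])
  have m2: "pos_index g E + dim I \<le> dim E"
    by (rule pos_index_le[OF sE I(1) I(2)]) (use I(3) in auto)
  have m3: "neg_index g E + dim I \<le> dim E"
    unfolding neg_index_pos by (rule pos_index_le[OF sE I(1) I(2)]) (use I(3) in auto)
  have part1: "\<bar>int (pos_index g E) - int (neg_index g E)\<bar> \<le> int (dim K)"
    unfolding abs_le_iff using m1 m2 m3 I(4) by linarith
  have KE: "K \<subseteq> E" unfolding K_def E_def using ker_mono[OF lN, of 1 "DIM('a)"] by auto
  have part2: "nondegenerate_on g K \<longleftrightarrow> dim E = dim K"
  proof
    assume "dim E = dim K"
    then have "K = E" using subspace_dim_equal[OF sK sE KE] by simp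
    then show "nondegenerate_on g K" using ndE by simp
  next
    assume ndK: "nondegenerate_on g K"
    show "dim E = dim K"
    proof (rule ccontr)
      assume ne: "dim E \<noteq> dim K"
      have "\<not> E \<subseteq> K"
      proof
        assume "E \<subseteq> K"
        then have "E = K" using KE by blast
        then show False using ne by simp
      qed
      then obtain x where x: "x \<in> E" "x \<notin> K" by blast
      have Nx: "N x \<noteq> 0" using x(2) Keq by simp
      have ex: "\<exists>j. (N ^^ j) x = 0" using x(1) unfolding E_def by blast
      define j0 where "j0 = (LEAST j. (N ^^ j) x = 0)"
      have j0: "(N ^^ j0) x = 0" using LeastI_ex[OF ex] unfolding j0_def .
      have "x \<noteq> 0" using Nx linear_0[OF lN] by auto
      then have "j0 \<noteq> 0" using j0 by (cases j0) auto
      moreover have "j0 \<noteq> 1" using j0 Nx by auto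
      ultimately have i: "j0 = Suc (Suc (j0 - 2))" by simp
      define i where "i = j0 - 2"
      define y where "y = (N ^^ Suc i) x"
      have ij: "Suc (Suc i) = j0" using i unfolding i_def by simp
      have "Suc i < j0" using ij by simp
      then have "\<not> (N ^^ Suc i) x = 0" unfolding j0_def by (rule not_less_Least)
      then have y0: "y \<noteq> 0" unfolding y_def .
      have "(N ^^ Suc (Suc i)) x = 0" using j0 by (simp only: ij)
      then have yK: "y \<in> K" unfolding Keq y_def by simp
      have yperp: "\<forall>z\<in>K. g y z = 0"
      proof
        fix z assume "z \<in> K"
        then have "N z = 0" using Keq by simp
        have "g y z = g ((N ^^ i) x) (N z)" unfolding y_def using sN by simp
        then show "g y z = 0" using \<open>N z = 0\<close> by (simp add: bilinear_rzero[OF bl])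
      qed
      show False using ndK yK yperp y0 unfolding nondegenerate_on_def by blast
    qed
  qed
  show ?thesis unfolding E_def[symmetric] K_def[symmetric] using part1 part2 by (rule conjI)
qed


theorem corollary2p6:
  fixes g :: "real^'n \<Rightarrow> real^'n \<Rightarrow> real"
    and A :: "real^'n \<Rightarrow> real^'n"
    and lam :: real
  assumes "sym_bilinear g"
    and "nondegenerate_on g UNIV"
    and "linear A"
    and "g_symmetric g A"
    and "\<exists>v. v \<noteq> 0 \<and> A v = lam *\<^sub>R v"
  shows "\<bar>signature g (gen_kernel A lam CARD('n))\<bar> \<le> int (dim (gen_kernel A lam 1))
         \<and> (nondegenerate_on g (gen_kernel A lam 1) \<longleftrightarrow>
           dim (gen_kernel A lam CARD('n)) = dim (gen_kernel A lam 1))"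
proof -
  define N where "N = (\<lambda>x. A x - lam *\<^sub>R x)"
  have bl: "bilinear g" using assms(1) by (simp add: sym_bilinear_def)
  have lN: "linear N" unfolding N_def
    by (rule linearI) (simp_all add: linear_add[OF assms(3)] linear_scale[OF assms(3)] algebra_simps)
  have sN: "\<And>a b. g (N a) b = g a (N b)" unfolding N_def using assms(4)
    by (simp add: bilinear_lsub[OF bl] bilinear_rsub[OF bl] bilinear_lmul[OF bl] bilinear_rmul[OF bl] g_symmetric_def)
  have D: "DIM(real^'n) = CARD('n)" by simp
  have "\<bar>int (pos_index g {x. (N ^^ DIM(real^'n)) x = 0}) - int (neg_index g {x. (N ^^ DIM(real^'n)) x = 0})\<bar>
           \<le> int (dim {x. (N ^^ 1) x = 0})
         \<and> (nondegenerate_on g {x. (N ^^ 1) x = 0} \<longleftrightarrow>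
             dim {x. (N ^^ DIM(real^'n)) x = 0} = dim {x. (N ^^ 1) x = 0})"
    by (rule main_generic[OF assms(1) assms(2) lN sN])
  then show ?thesis unfolding signature_def gen_kernel_def N_def[symmetric] D .
qed

end
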